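(* Let $A$ be a finite group. (1) Suppose $G$ is a finite group containing $A$ and an element $c$ of order $n$ such that $A\cap\langle c\rangle=\{1_G\}$ and $G=A\langle c\rangle$. For each $x\in A$ there are unique $\varphi(x)\in A$ and $\Pi(x)\in\mathbb{Z}_n$ with $cx=\varphi(x)c^{\Pi(x)}$. Then $\varphi$ is a skew-morphism of $A$ and $\Pi:A\to\mathbb{Z}_n$ is an extended power function of $\varphi$. (2) Conversely, let $\varphi$ be a skew-morphism of $A$ and let $\Pi:A\to\mathbb{Z}_n$ be an extended power function of $\varphi$, where $n$ is a positive multiple of the order of $\varphi$. Then there is a finite group $G=A\langle c\rangle$ with $c$ of order $n$, $A\cap\langle c\rangle=\{1\}$, such that the skew-morphism determined by the equations $cx=\varphi'(x)c^{\Pi'(x)}$ ($x\in A$) is $\varphi'=\varphi$. (3) Moreover, let $(\varphi_i,\Pi_i)$, $i=1,2$, be two pairs, each consisting of a skew-morphism $\varphi_i$ of $A$ and an extended power function $\Pi_i:A\to\mathbb{Z}_n$ of $\varphi_i$, and let $A\langle c_i\rangle$ be the corresponding groups as in (2) (so that $c_ix=\varphi_i(x)c_i^{\Pi_i(x)}$ for all $x\in A$). Then there exists a group isomorphism $\Theta:A\langle c_1\rangle\to A\langle c_2\rangle$ with $\Theta(A)=A$ and $\Theta(c_1)=c_2$ if and only if there is an automorphism $\theta$ of $A$ such that $\varphi_2=\theta\varphi_1\theta^{-1}$ and $\Pi_2=\Pi_1\circ\theta^{-1}$.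
   Context: A skew-morphism of a finite group $A$ is a permutation $\varphi$ of $A$ with $\varphi(1_A)=1_A$ for which there is a function $\pi:A\to\mathbb{Z}_m$, where $m$ is the order of $\varphi$ as a permutation, such that $\varphi(xy)=\varphi(x)\varphi^{\pi(x)}(y)$ for all $x,y\in A$; $\pi$ is called the power function of $\varphi$. For a function $f$ on $A$ with integer (or residue) values, the derived function is $\sigma_f(x,0)=0$ and $\sigma_f(x,k)=\sum_{i=1}^{k}f(\varphi^{i-1}(x))$ for integers $k>0$. For a positive multiple $n$ of $m$, a function $\Pi:A\to\mathbb{Z}_n$ is an extended power function of $\varphi$ if: (a) $\Pi(x)\equiv\pi(x)\pmod m$ for all $x\in A$; (b) $\Pi(1_A)\equiv1\pmod n$; (c) $\Pi(xy)\equiv\sum_{i=1}^{\Pi(x)}\Pi(\varphi^{i-1}(y))\pmod n$ for all $x,y\in A$ (with $\Pi(x)$ represented by a nonnegative integer). *)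

theory Defs
  imports "HOL-Algebra.Algebra"
begin

definition perm_order :: "('a, 'b) monoid_scheme \<Rightarrow> ('a \<Rightarrow> 'a) \<Rightarrow> nat" where
  "perm_order A \<phi> = (LEAST k. 0 < k \<and> (\<forall>x\<in>carrier A. (\<phi> ^^ k) x = x))"

(* pi is a power function of phi, with values in Z_m represented by {0..<m} *)
definition power_function :: "('a, 'b) monoid_scheme \<Rightarrow> ('a \<Rightarrow> 'a) \<Rightarrow> ('a \<Rightarrow> nat) \<Rightarrow> bool" where
  "power_function A \<phi> \<pi> \<longleftrightarrow>
     (\<forall>x\<in>carrier A. \<pi> x < perm_order A \<phi>) \<and>
     (\<forall>x\<in>carrier A. \<forall>y\<in>carrier A.
        \<phi> (x \<otimes>\<^bsub>A\<^esub> y) = \<phi> x \<otimes>\<^bsub>A\<^esub> (\<phi> ^^ \<pi> x) y)"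

definition skew_morphism :: "('a, 'b) monoid_scheme \<Rightarrow> ('a \<Rightarrow> 'a) \<Rightarrow> bool" where
  "skew_morphism A \<phi> \<longleftrightarrow>
     bij_betw \<phi> (carrier A) (carrier A) \<and> \<phi> \<one>\<^bsub>A\<^esub> = \<one>\<^bsub>A\<^esub> \<and>
     (\<exists>\<pi>. power_function A \<phi> \<pi>)"

(* Pi : A -> Z_n (values represented in {0..<n}) is an extended power function of phi *)
definition ext_power_function ::
  "('a, 'b) monoid_scheme \<Rightarrow> ('a \<Rightarrow> 'a) \<Rightarrow> nat \<Rightarrow> ('a \<Rightarrow> nat) \<Rightarrow> bool" where
  "ext_power_function A \<phi> n P \<longleftrightarrow>
     0 < n \<and> perm_order A \<phi> dvd n \<and>
     (\<forall>x\<in>carrier A. P x < n) \<and>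
     (\<exists>\<pi>. power_function A \<phi> \<pi> \<and>
        (\<forall>x\<in>carrier A. P x mod perm_order A \<phi> = \<pi> x)) \<and>
     P \<one>\<^bsub>A\<^esub> mod n = 1 mod n \<and>
     (\<forall>x\<in>carrier A. \<forall>y\<in>carrier A.
        P (x \<otimes>\<^bsub>A\<^esub> y) mod n = (\<Sum>i<P x. P ((\<phi> ^^ i) y)) mod n)"

definition skew_product :: "('a, 'b) monoid_scheme \<Rightarrow> ('g, 'h) monoid_scheme \<Rightarrow>
    ('a \<Rightarrow> 'g) \<Rightarrow> 'g \<Rightarrow> nat \<Rightarrow> bool" where
  "skew_product A G \<iota> c n \<longleftrightarrow>
     group G \<and> finite (carrier G) \<and>
     \<iota> \<in> hom A G \<and> inj_on \<iota> (carrier A) \<and>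
     c \<in> carrier G \<and> group.ord G c = n \<and>
     \<iota> ` carrier A \<inter> generate G {c} = {\<one>\<^bsub>G\<^esub>} \<and>
     carrier G = \<iota> ` carrier A <#>\<^bsub>G\<^esub> generate G {c}"

definition skew_relation :: "('a, 'b) monoid_scheme \<Rightarrow> ('g, 'h) monoid_scheme \<Rightarrow>
    ('a \<Rightarrow> 'g) \<Rightarrow> 'g \<Rightarrow> nat \<Rightarrow> ('a \<Rightarrow> 'a) \<Rightarrow> ('a \<Rightarrow> nat) \<Rightarrow> bool" where
  "skew_relation A G \<iota> c n \<phi> P \<longleftrightarrow>
     (\<forall>x\<in>carrier A. \<phi> x \<in> carrier A \<and> P x < n \<and>
        c \<otimes>\<^bsub>G\<^esub> \<iota> x = \<iota> (\<phi> x) \<otimes>\<^bsub>G\<^esub> c [^]\<^bsub>G\<^esub> P x)"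

end

theory Submission
  imports Defs
begin

definition sig :: "('a \<Rightarrow> nat) \<Rightarrow> ('a \<Rightarrow> 'a) \<Rightarrow> 'a \<Rightarrow> nat \<Rightarrow> nat" where
  "sig f \<phi> x k = (\<Sum>i<k. f ((\<phi> ^^ i) x))"

lemma sig_0[simp]: "sig f \<phi> x 0 = 0" by (simp add: sig_def)
lemma sig_Suc: "sig f \<phi> x (Suc k) = sig f \<phi> x k + f ((\<phi> ^^ k) x)" by (simp add: sig_def)
lemma sig_add: "sig f \<phi> x (a + b) = sig f \<phi> x a + sig f \<phi> ((\<phi> ^^ a) x) b"
proof (induction b)
  case (Suc b)
  have "(\<phi>^^a)((\<phi>^^b)x) = (\<phi>^^b)((\<phi>^^a)x)" by (metis add.commute comp_apply funpow_add)
  then show ?case using Suc by (simp add: sig_Suc funpow_add)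
qed simp

lemma funpow_apply_add: "(f ^^ a) ((f ^^ b) x) = (f ^^ (a + b)) x"
  by (simp add: funpow_add)

lemma funpow_closed: "(\<And>x. x \<in> S \<Longrightarrow> \<phi> x \<in> S) \<Longrightarrow> x \<in> S \<Longrightarrow> (\<phi> ^^ k) x \<in> S"
  by (induction k) auto

lemma perm_period_exists:
  assumes fin: "finite S" and bij: "bij_betw \<phi> S S"
  shows "\<exists>k>0. \<forall>x\<in>S. (\<phi> ^^ k) x = x"
proof -
  have cl: "\<And>x. x \<in> S \<Longrightarrow> \<phi> x \<in> S" using bij bij_betwE by blast
  define F where "F k = restrict (\<phi> ^^ k) S" for k
  have "F ` UNIV \<subseteq> extensional_funcset S S"
    using funpow_closed[OF cl] by (auto simp: F_def)
  moreover have "finite (extensional_funcset S S)" using fin by (simp add: finite_PiE)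
  ultimately have "finite (F ` UNIV)" using finite_subset by blast
  then have "\<not> inj F" using finite_imageD infinite_UNIV_nat by blast
  then obtain i j where ij: "i \<noteq> j" "F i = F j" by (auto simp: inj_def)
  then have "\<exists>i j. i < j \<and> F i = F j" by (metis nat_neq_iff)
  then obtain i j where ij: "i < j" "F i = F j" by blast
  have inj: "inj_on (\<phi> ^^ i) S"
  proof (induction i)
    case 0 then show ?case by simp
  next
    case (Suc i)
    have "inj_on (\<phi> ^^ i \<circ> \<phi>) S"
      by (rule comp_inj_on) (use bij Suc cl in \<open>auto simp: bij_betw_def inj_on_def\<close>)
    then show ?case by (metis funpow_Suc_right)
  qed
  have "\<forall>x\<in>S. (\<phi> ^^ (j - i)) x = x"
  proof
    fix x assume x: "x \<in> S"
    have "(\<phi> ^^ i) ((\<phi> ^^ (j - i)) x) = (\<phi> ^^ j) x"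
      using ij(1) by (metis funpow_add le_add_diff_inverse less_imp_le o_apply)
    also have "\<dots> = (\<phi> ^^ i) x" using ij(2) x unfolding F_def by (metis restrict_apply')
    finally show "(\<phi> ^^ (j - i)) x = x"
      using inj x funpow_closed[OF cl] by (meson inj_on_def)
  qed
  then show ?thesis using ij(1) by (intro exI[of _ "j - i"]) auto
qed

locale permA =
  fixes A :: "('a, 'b) monoid_scheme" and \<phi> :: "'a \<Rightarrow> 'a"
  assumes fin: "finite (carrier A)" and bij: "bij_betw \<phi> (carrier A) (carrier A)"
begin

abbreviation "m \<equiv> perm_order A \<phi>"

lemma cl: "x \<in> carrier A \<Longrightarrow> \<phi> x \<in> carrier A" using bij bij_betwE by blast

lemma pcl: "x \<in> carrier A \<Longrightarrow> (\<phi> ^^ k) x \<in> carrier A" using funpow_closed cl by metis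

lemma m_props: "0 < m" "\<And>x. x \<in> carrier A \<Longrightarrow> (\<phi> ^^ m) x = x"
proof -
  obtain k where "k > 0" "\<forall>x\<in>carrier A. (\<phi> ^^ k) x = x" using perm_period_exists[OF fin bij] by blast
  then have "\<exists>k. 0 < k \<and> (\<forall>x\<in>carrier A. (\<phi> ^^ k) x = x)" by blast
  from LeastI_ex[OF this] have "0 < m \<and> (\<forall>x\<in>carrier A. (\<phi> ^^ m) x = x)"
    unfolding perm_order_def .
  then show "0 < m" "\<And>x. x \<in> carrier A \<Longrightarrow> (\<phi> ^^ m) x = x" by auto
qed

lemma pow_mult_m: "x \<in> carrier A \<Longrightarrow> (\<phi> ^^ (m * q)) x = x"
  by (induction q) (simp_all add: funpow_add m_props(2) pcl)

lemma pow_mod: "x \<in> carrier A \<Longrightarrow> (\<phi> ^^ a) x = (\<phi> ^^ (a mod m)) x"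
proof -
  assume x: "x \<in> carrier A"
  have "(\<phi> ^^ a) x = (\<phi> ^^ (a mod m)) ((\<phi> ^^ (m * (a div m))) x)"
    by (metis funpow_add mod_mult_div_eq o_apply)
  then show ?thesis using pow_mult_m x by simp
qed

lemma pow_cong: "x \<in> carrier A \<Longrightarrow> a mod m = b mod m \<Longrightarrow> (\<phi> ^^ a) x = (\<phi> ^^ b) x"
  using pow_mod by metis

lemma m_dvd: assumes "\<And>x. x \<in> carrier A \<Longrightarrow> (\<phi> ^^ s) x = x" shows "m dvd s"
proof (rule ccontr)
  assume "\<not> m dvd s"
  then have "0 < s mod m" by (simp add: dvd_eq_mod_eq_0)
  moreover have "\<forall>x\<in>carrier A. (\<phi> ^^ (s mod m)) x = x" using assms pow_mod by metis
  ultimately have "m \<le> s mod m" unfolding perm_order_def by (intro Least_le) auto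
  then show False using m_props(1) by (meson leD mod_less_divisor)
qed

end

locale skewA = permA A \<phi> + group A for A :: "('a, 'b) monoid_scheme" and \<phi> +
  fixes \<pi> :: "'a \<Rightarrow> nat"
  assumes phi1: "\<phi> \<one>\<^bsub>A\<^esub> = \<one>\<^bsub>A\<^esub>" and pf: "power_function A \<phi> \<pi>"
begin

lemma pf_mult: "x \<in> carrier A \<Longrightarrow> y \<in> carrier A \<Longrightarrow> \<phi> (x \<otimes>\<^bsub>A\<^esub> y) = \<phi> x \<otimes>\<^bsub>A\<^esub> (\<phi> ^^ \<pi> x) y"
  using pf unfolding power_function_def by blast

lemma pow_one: "(\<phi> ^^ k) \<one>\<^bsub>A\<^esub> = \<one>\<^bsub>A\<^esub>"
  by (induction k) (simp_all add: phi1)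

lemma skew_pow: "x \<in> carrier A \<Longrightarrow> y \<in> carrier A \<Longrightarrow>
   (\<phi> ^^ k) (x \<otimes>\<^bsub>A\<^esub> y) = (\<phi> ^^ k) x \<otimes>\<^bsub>A\<^esub> (\<phi> ^^ sig \<pi> \<phi> x k) y"
proof (induction k)
  case 0 then show ?case by simp
next
  case (Suc k)
  have "(\<phi> ^^ Suc k) (x \<otimes>\<^bsub>A\<^esub> y) = \<phi> ((\<phi> ^^ k) x \<otimes>\<^bsub>A\<^esub> (\<phi> ^^ sig \<pi> \<phi> x k) y)"
    using Suc by simp
  also have "\<dots> = \<phi> ((\<phi> ^^ k) x) \<otimes>\<^bsub>A\<^esub> (\<phi> ^^ \<pi> ((\<phi> ^^ k) x)) ((\<phi> ^^ sig \<pi> \<phi> x k) y)"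
    using Suc pcl pf_mult by blast
  also have "(\<phi> ^^ \<pi> ((\<phi> ^^ k) x)) ((\<phi> ^^ sig \<pi> \<phi> x k) y) = (\<phi> ^^ sig \<pi> \<phi> x (Suc k)) y"
    by (simp add: sig_Suc funpow_apply_add add.commute)
  finally show ?case by simp
qed

lemma m_dvd_sig: assumes x: "x \<in> carrier A" shows "m dvd sig \<pi> \<phi> x m"
proof (rule m_dvd)
  fix y assume y: "y \<in> carrier A"
  have "x \<otimes>\<^bsub>A\<^esub> y = (\<phi> ^^ m) (x \<otimes>\<^bsub>A\<^esub> y)" using m_props(2) x y by simp
  also have "\<dots> = x \<otimes>\<^bsub>A\<^esub> (\<phi> ^^ sig \<pi> \<phi> x m) y" using skew_pow x y m_props(2) by simp
  finally show "(\<phi> ^^ sig \<pi> \<phi> x m) y = y" using x y pcl by (metis l_cancel)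
qed

end

lemma sig_period:
  assumes "\<And>y. y \<in> S \<Longrightarrow> (\<phi> ^^ p) y = y" "x \<in> S"
  shows "sig f \<phi> x (p * q) = q * sig f \<phi> x p"
proof (induction q)
  case (Suc q)
  have "sig f \<phi> x (p * Suc q) = sig f \<phi> x p + sig f \<phi> ((\<phi> ^^ p) x) (p * q)"
    by (metis mult_Suc_right sig_add)
  then show ?case using Suc assms by simp
qed simp

locale extA = skewA +
  fixes n :: nat and P :: "'a \<Rightarrow> nat"
  assumes npos: "0 < n" and mdvdn: "m dvd n" and Pn: "\<And>x. x \<in> carrier A \<Longrightarrow> P x < n"
    and Pm: "\<And>x. x \<in> carrier A \<Longrightarrow> P x mod m = \<pi> x"
    and P1: "P \<one>\<^bsub>A\<^esub> mod n = 1 mod n"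
    and Pc: "\<And>x y. x \<in> carrier A \<Longrightarrow> y \<in> carrier A \<Longrightarrow>
        P (x \<otimes>\<^bsub>A\<^esub> y) mod n = (\<Sum>i<P x. P ((\<phi> ^^ i) y)) mod n"
begin

lemma Pc': "x \<in> carrier A \<Longrightarrow> y \<in> carrier A \<Longrightarrow> P (x \<otimes>\<^bsub>A\<^esub> y) mod n = sig P \<phi> y (P x) mod n"
  unfolding sig_def by (rule Pc)

lemma P1': "P \<one>\<^bsub>A\<^esub> = 1 mod n"
  by (metis P1 Pn one_closed mod_less)

lemma sigPm: "x \<in> carrier A \<Longrightarrow> sig P \<phi> x k mod m = sig \<pi> \<phi> x k mod m"
proof (induction k)
  case (Suc k)
  have "P ((\<phi> ^^ k) x) mod m = \<pi> ((\<phi> ^^ k) x) mod m"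
    using Pm[OF pcl[OF Suc.prems, of k]] by (metis mod_mod_trivial)
  from mod_add_cong[OF Suc.IH[OF Suc.prems] this] show ?case by (simp add: sig_Suc)
qed simp

lemma phi_n: "x \<in> carrier A \<Longrightarrow> (\<phi> ^^ n) x = x"
  using mdvdn pow_mult_m by (metis dvdE)

lemma sig_n: assumes x: "x \<in> carrier A" shows "sig P \<phi> x n mod n = 0"
proof -
  obtain q where q: "n = m * q" using mdvdn by blast
  have "m dvd sig P \<phi> x m" using sigPm[OF x, of m] m_dvd_sig[OF x]
    by (simp add: mod_eq_0_iff_dvd[symmetric])
  then obtain t where t: "sig P \<phi> x m = m * t" by blast
  have "sig P \<phi> x n = q * sig P \<phi> x m" using q sig_period[where S="carrier A" and \<phi>=\<phi> and p=m and x=x and f=P and q=q] m_props(2) x by simp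
  then have "sig P \<phi> x n = n * t" using t q by simp
  then show ?thesis by simp
qed

lemma sig_mod: assumes x: "x \<in> carrier A" shows "sig P \<phi> x a mod n = sig P \<phi> x (a mod n) mod n"
proof -
  have "sig P \<phi> x a = sig P \<phi> x (a mod n + n * (a div n))" by simp
  also have "\<dots> = sig P \<phi> x (a mod n) + (a div n) * sig P \<phi> ((\<phi> ^^ (a mod n)) x) n"
    using sig_add sig_period[where S="carrier A" and \<phi>=\<phi> and p=n, OF phi_n] pcl x by metis
  finally show ?thesis using sig_n[OF pcl[OF x]] by (metis mod_mult_right_eq mod_add_right_eq mult_0_right add_0_right)
qed

lemma sig_mult: assumes x: "x \<in> carrier A" and y: "y \<in> carrier A"
  shows "sig P \<phi> (x \<otimes>\<^bsub>A\<^esub> y) i mod n = sig P \<phi> y (sig P \<phi> x i) mod n"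
proof (induction i)
  case (Suc i)
  let ?s = "sig P \<phi> x i"
  have e1: "(\<phi> ^^ i) (x \<otimes>\<^bsub>A\<^esub> y) = (\<phi> ^^ i) x \<otimes>\<^bsub>A\<^esub> (\<phi> ^^ ?s) y"
    using skew_pow[OF x y] pow_cong[OF y] sigPm[OF x] by metis
  have "P ((\<phi> ^^ i) (x \<otimes>\<^bsub>A\<^esub> y)) mod n = sig P \<phi> ((\<phi> ^^ ?s) y) (P ((\<phi> ^^ i) x)) mod n"
    unfolding e1 by (rule Pc') (use x y pcl in auto)
  then have "sig P \<phi> (x \<otimes>\<^bsub>A\<^esub> y) (Suc i) mod n
      = (sig P \<phi> y ?s + sig P \<phi> ((\<phi> ^^ ?s) y) (P ((\<phi> ^^ i) x))) mod n"
    using Suc by (simp add: sig_Suc) (metis mod_add_cong)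
  also have "\<dots> = sig P \<phi> y (sig P \<phi> x (Suc i)) mod n" by (simp add: sig_Suc sig_add)
  finally show ?case .
qed simp

end

lemma (in permA) pow_inj: "x \<in> carrier A \<Longrightarrow> y \<in> carrier A \<Longrightarrow> (\<phi> ^^ k) x = (\<phi> ^^ k) y \<Longrightarrow> x = y"
proof (induction k)
  case (Suc k)
  then show ?case using bij pcl unfolding bij_betw_def inj_on_def by auto
qed simp

context extA begin

definition SG :: "('a \<times> nat) monoid" where
  "SG = \<lparr>carrier = carrier A \<times> {..<n},
         monoid.mult = (\<lambda>a b. (fst a \<otimes>\<^bsub>A\<^esub> (\<phi> ^^ snd a) (fst b), (sig P \<phi> (fst b) (snd a) + snd b) mod n)),
         one = (\<one>\<^bsub>A\<^esub>, 0)\<rparr>"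

lemma SG_simps: "carrier SG = carrier A \<times> {..<n}" "\<one>\<^bsub>SG\<^esub> = (\<one>\<^bsub>A\<^esub>, 0)"
  "(x, i) \<otimes>\<^bsub>SG\<^esub> (y, j) = (x \<otimes>\<^bsub>A\<^esub> (\<phi> ^^ i) y, (sig P \<phi> y i + j) mod n)"
  by (simp_all add: SG_def)

lemma sig_one: "sig P \<phi> \<one>\<^bsub>A\<^esub> i = i * (1 mod n)"
  by (induction i) (simp_all add: sig_Suc pow_one P1')

lemma SG_assoc:
  assumes x: "x \<in> carrier A" and y: "y \<in> carrier A" and z: "z \<in> carrier A"
    and i: "i < n" and j: "j < n" and k: "k < n"
  shows "((x, i) \<otimes>\<^bsub>SG\<^esub> (y, j)) \<otimes>\<^bsub>SG\<^esub> (z, k) = (x, i) \<otimes>\<^bsub>SG\<^esub> ((y, j) \<otimes>\<^bsub>SG\<^esub> (z, k))"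
proof -
  define s where "s = (sig P \<phi> y i + j) mod n"
  define w where "w = (\<phi> ^^ j) z"
  have w: "w \<in> carrier A" using z pcl w_def by simp
  have "s mod m = (sig P \<phi> y i + j) mod m" unfolding s_def using mdvdn by (simp add: mod_mod_cancel)
  also have "\<dots> = (sig \<pi> \<phi> y i + j) mod m" using sigPm[OF y] mod_add_cong by blast
  finally have "(\<phi> ^^ s) z = (\<phi> ^^ (sig \<pi> \<phi> y i + j)) z" using pow_cong[OF z] by blast
  also have "\<dots> = (\<phi> ^^ sig \<pi> \<phi> y i) w" by (simp add: w_def funpow_apply_add)
  finally have e1: "(\<phi> ^^ s) z = (\<phi> ^^ sig \<pi> \<phi> y i) w" .
  have c1: "(x \<otimes>\<^bsub>A\<^esub> (\<phi> ^^ i) y) \<otimes>\<^bsub>A\<^esub> (\<phi> ^^ s) z = x \<otimes>\<^bsub>A\<^esub> (\<phi> ^^ i) (y \<otimes>\<^bsub>A\<^esub> w)"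
    unfolding e1 skew_pow[OF y w] using x y w pcl by (simp add: m_assoc)
  have "sig P \<phi> z s mod n = sig P \<phi> z (j + sig P \<phi> y i) mod n"
    unfolding s_def using sig_mod[OF z] by (metis add.commute)
  also have "\<dots> = (sig P \<phi> z j + sig P \<phi> w (sig P \<phi> y i)) mod n"
    by (simp add: sig_add w_def)
  finally have a1: "sig P \<phi> z s mod n = (sig P \<phi> z j + sig P \<phi> w (sig P \<phi> y i)) mod n" .
  have a2: "sig P \<phi> (y \<otimes>\<^bsub>A\<^esub> w) i mod n = sig P \<phi> w (sig P \<phi> y i) mod n"
    using sig_mult[OF y w] .
  have c2: "(sig P \<phi> z s + k) mod n = (sig P \<phi> (y \<otimes>\<^bsub>A\<^esub> w) i + (sig P \<phi> z j + k) mod n) mod n"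
  proof -
    have "(sig P \<phi> z s + k) mod n = (sig P \<phi> z j + sig P \<phi> w (sig P \<phi> y i) + k) mod n"
      using a1 by (metis mod_add_left_eq)
    also have "\<dots> = (sig P \<phi> w (sig P \<phi> y i) + (sig P \<phi> z j + k)) mod n" by (simp add: algebra_simps)
    also have "\<dots> = (sig P \<phi> (y \<otimes>\<^bsub>A\<^esub> w) i + (sig P \<phi> z j + k)) mod n"
      using a2 by (metis mod_add_left_eq)
    also have "\<dots> = (sig P \<phi> (y \<otimes>\<^bsub>A\<^esub> w) i + (sig P \<phi> z j + k) mod n) mod n"
      by (simp add: mod_add_right_eq)
    finally show ?thesis .
  qed
  show ?thesis using c1 c2 by (simp add: SG_simps s_def w_def)
qed

lemma SG_closed: "a \<in> carrier SG \<Longrightarrow> b \<in> carrier SG \<Longrightarrow> a \<otimes>\<^bsub>SG\<^esub> b \<in> carrier SG"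
  using npos by (cases a, cases b) (auto simp: SG_simps pcl)

lemma SG_l_one: "a \<in> carrier SG \<Longrightarrow> \<one>\<^bsub>SG\<^esub> \<otimes>\<^bsub>SG\<^esub> a = a"
  by (cases a) (auto simp: SG_simps)

lemma SG_r_one: "a \<in> carrier SG \<Longrightarrow> a \<otimes>\<^bsub>SG\<^esub> \<one>\<^bsub>SG\<^esub> = a"
proof (cases a)
  case (Pair x i)
  assume "a \<in> carrier SG"
  then have "x \<in> carrier A" "i < n" using Pair by (auto simp: SG_simps)
  moreover have "i * (1 mod n) mod n = i" using \<open>i < n\<close> by (cases "n = 1") auto
  ultimately show ?thesis using Pair by (simp add: SG_simps pow_one sig_one)
qed

lemma SG_l_inj: "a \<in> carrier SG \<Longrightarrow> b \<in> carrier SG \<Longrightarrow> b' \<in> carrier SG \<Longrightarrow>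
   a \<otimes>\<^bsub>SG\<^esub> b = a \<otimes>\<^bsub>SG\<^esub> b' \<Longrightarrow> b = b'"
proof -
  assume as: "a \<in> carrier SG" "b \<in> carrier SG" "b' \<in> carrier SG" "a \<otimes>\<^bsub>SG\<^esub> b = a \<otimes>\<^bsub>SG\<^esub> b'"
  obtain x i where a: "a = (x, i)" by force
  obtain y j where b: "b = (y, j)" by force
  obtain y' j' where b': "b' = (y', j')" by force
  have c: "x \<in> carrier A" "y \<in> carrier A" "y' \<in> carrier A" "j < n" "j' < n"
    using as a b b' by (auto simp: SG_simps)
  have "x \<otimes>\<^bsub>A\<^esub> (\<phi> ^^ i) y = x \<otimes>\<^bsub>A\<^esub> (\<phi> ^^ i) y'"
    using as(4) a b b' by (simp add: SG_simps)
  then have "(\<phi> ^^ i) y = (\<phi> ^^ i) y'" using c pcl l_cancel by blast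
  then have yy: "y = y'" using pow_inj c by blast
  have "(sig P \<phi> y i + j) mod n = (sig P \<phi> y i + j') mod n"
    using as(4) a b b' yy by (simp add: SG_simps)
  then have "j mod n = j' mod n" by (simp add: nat_mod_eq_iff)
  then show "b = b'" using b b' yy c by simp
qed

end

context extA begin

lemma SG_assoc': "a \<in> carrier SG \<Longrightarrow> b \<in> carrier SG \<Longrightarrow> d \<in> carrier SG \<Longrightarrow>
  (a \<otimes>\<^bsub>SG\<^esub> b) \<otimes>\<^bsub>SG\<^esub> d = a \<otimes>\<^bsub>SG\<^esub> (b \<otimes>\<^bsub>SG\<^esub> d)"
proof -
  assume as: "a \<in> carrier SG" "b \<in> carrier SG" "d \<in> carrier SG"
  obtain x i where a: "a = (x, i)" by force
  obtain y j where b: "b = (y, j)" by force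
  obtain z k where d: "d = (z, k)" by force
  have c: "x \<in> carrier A" "y \<in> carrier A" "z \<in> carrier A" "i < n" "j < n" "k < n"
    using as a b d by (auto simp: SG_simps(1))
  show ?thesis unfolding a b d by (rule SG_assoc[OF c])
qed

lemma SG_finite: "finite (carrier SG)"
  using fin by (simp add: SG_simps)

lemma SG_one_closed: "\<one>\<^bsub>SG\<^esub> \<in> carrier SG"
  using npos by (simp add: SG_simps)

lemma SG_r_inv: assumes a: "a \<in> carrier SG" shows "\<exists>b\<in>carrier SG. a \<otimes>\<^bsub>SG\<^esub> b = \<one>\<^bsub>SG\<^esub>"
proof -
  have inj: "inj_on (\<lambda>b. a \<otimes>\<^bsub>SG\<^esub> b) (carrier SG)"
  proof (rule inj_onI)
    fix b b' assume "b \<in> carrier SG" "b' \<in> carrier SG" "a \<otimes>\<^bsub>SG\<^esub> b = a \<otimes>\<^bsub>SG\<^esub> b'"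
    then show "b = b'" by (rule SG_l_inj[OF a])
  qed
  have sub: "(\<lambda>b. a \<otimes>\<^bsub>SG\<^esub> b) ` carrier SG \<subseteq> carrier SG" using SG_closed a by blast
  have "(\<lambda>b. a \<otimes>\<^bsub>SG\<^esub> b) ` carrier SG = carrier SG"
    by (rule endo_inj_surj[OF SG_finite sub inj])
  then show ?thesis using SG_one_closed by (metis imageE)
qed

lemma SG_group: "group SG"
proof (rule groupI)
  show "\<And>x y. x \<in> carrier SG \<Longrightarrow> y \<in> carrier SG \<Longrightarrow> x \<otimes>\<^bsub>SG\<^esub> y \<in> carrier SG" by (rule SG_closed)
  show "\<one>\<^bsub>SG\<^esub> \<in> carrier SG" by (rule SG_one_closed)
  show "\<And>x y z. x \<in> carrier SG \<Longrightarrow> y \<in> carrier SG \<Longrightarrow> z \<in> carrier SG \<Longrightarrow>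
    x \<otimes>\<^bsub>SG\<^esub> y \<otimes>\<^bsub>SG\<^esub> z = x \<otimes>\<^bsub>SG\<^esub> (y \<otimes>\<^bsub>SG\<^esub> z)" by (rule SG_assoc')
  show "\<And>x. x \<in> carrier SG \<Longrightarrow> \<one>\<^bsub>SG\<^esub> \<otimes>\<^bsub>SG\<^esub> x = x" by (rule SG_l_one)
  fix x assume x: "x \<in> carrier SG"
  obtain y where y: "y \<in> carrier SG" "x \<otimes>\<^bsub>SG\<^esub> y = \<one>\<^bsub>SG\<^esub>" using SG_r_inv[OF x] by blast
  obtain z where z: "z \<in> carrier SG" "y \<otimes>\<^bsub>SG\<^esub> z = \<one>\<^bsub>SG\<^esub>" using SG_r_inv[OF y(1)] by blast
  have "y \<otimes>\<^bsub>SG\<^esub> x = (y \<otimes>\<^bsub>SG\<^esub> x) \<otimes>\<^bsub>SG\<^esub> (y \<otimes>\<^bsub>SG\<^esub> z)"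
    using z(2) SG_r_one SG_closed x y by simp
  also have "\<dots> = y \<otimes>\<^bsub>SG\<^esub> ((x \<otimes>\<^bsub>SG\<^esub> y) \<otimes>\<^bsub>SG\<^esub> z)"
    using SG_assoc' SG_closed x y z by metis
  also have "\<dots> = \<one>\<^bsub>SG\<^esub>" using y z SG_l_one by simp
  finally show "\<exists>y\<in>carrier SG. y \<otimes>\<^bsub>SG\<^esub> x = \<one>\<^bsub>SG\<^esub>" using y by blast
qed

definition "cSG = (\<one>\<^bsub>A\<^esub>, 1 mod n)"
definition "iSG = (\<lambda>x. (x, 0::nat))"

lemma cSG_pow: "cSG [^]\<^bsub>SG\<^esub> (k::nat) = (\<one>\<^bsub>A\<^esub>, k mod n)"
proof (induction k)
  case 0 then show ?case by (simp add: SG_simps)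
next
  case (Suc k)
  have "(k mod n * (1 mod n) + 1 mod n) mod n = Suc k mod n"
    using npos by (cases "n = 1") (simp_all add: mod_Suc_eq)
  then show ?case using Suc by (simp add: cSG_def SG_simps pow_one sig_one)
qed

lemma cSG_closed: "cSG \<in> carrier SG" using npos by (simp add: cSG_def SG_simps)

lemma cSG_ord: "group.ord SG cSG = n"
proof -
  have "\<forall>k. cSG [^]\<^bsub>SG\<^esub> k = \<one>\<^bsub>SG\<^esub> \<longleftrightarrow> n dvd k"
    by (simp add: cSG_pow SG_simps dvd_eq_mod_eq_0)
  then show ?thesis using group.ord_unique[OF SG_group cSG_closed] by blast
qed

lemma gen_cSG: "generate SG {cSG} = {\<one>\<^bsub>A\<^esub>} \<times> {..<n}"
proof -
  have "generate SG {cSG} = {cSG [^]\<^bsub>SG\<^esub> k | k. k \<in> (UNIV :: nat set)}"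
    by (rule group.generate_pow_on_finite_carrier[OF SG_group SG_finite cSG_closed])
  also have "\<dots> = {\<one>\<^bsub>A\<^esub>} \<times> {..<n}"
  proof (intro equalityI subsetI)
    fix a assume "a \<in> {cSG [^]\<^bsub>SG\<^esub> k | k. k \<in> (UNIV :: nat set)}"
    then show "a \<in> {\<one>\<^bsub>A\<^esub>} \<times> {..<n}" unfolding cSG_pow using npos by auto
  next
    fix a assume "a \<in> {\<one>\<^bsub>A\<^esub>} \<times> {..<n}"
    then obtain b where "a = (\<one>\<^bsub>A\<^esub>, b)" "b < n" by auto
    then have "a = cSG [^]\<^bsub>SG\<^esub> b" unfolding cSG_pow by simp
    then show "a \<in> {cSG [^]\<^bsub>SG\<^esub> k | k. k \<in> (UNIV :: nat set)}" by blast
  qed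
  finally show ?thesis .
qed

lemma SG_skew_product: "skew_product A SG iSG cSG n"
  unfolding skew_product_def
proof (intro conjI)
  show "group SG" by (rule SG_group)
  show "finite (carrier SG)" by (rule SG_finite)
  show "iSG \<in> hom A SG" by (rule homI) (use npos in \<open>auto simp: iSG_def SG_simps\<close>)
  show "inj_on iSG (carrier A)" by (simp add: iSG_def inj_on_def)
  show "cSG \<in> carrier SG" by (rule cSG_closed)
  show "group.ord SG cSG = n" by (rule cSG_ord)
  show "iSG ` carrier A \<inter> generate SG {cSG} = {\<one>\<^bsub>SG\<^esub>}"
    unfolding gen_cSG
  proof (intro equalityI subsetI)
    fix a assume "a \<in> iSG ` carrier A \<inter> ({\<one>\<^bsub>A\<^esub>} \<times> {..<n})"
    then obtain x where "a = (x, 0)" "x = \<one>\<^bsub>A\<^esub>" unfolding iSG_def by blast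
    then show "a \<in> {\<one>\<^bsub>SG\<^esub>}" by (simp add: SG_simps)
  next
    fix a assume "a \<in> {\<one>\<^bsub>SG\<^esub>}"
    then have "a = iSG \<one>\<^bsub>A\<^esub>" by (simp add: SG_simps iSG_def)
    then show "a \<in> iSG ` carrier A \<inter> ({\<one>\<^bsub>A\<^esub>} \<times> {..<n})"
      using npos by (simp add: iSG_def)
  qed
  show "carrier SG = iSG ` carrier A <#>\<^bsub>SG\<^esub> generate SG {cSG}"
    unfolding gen_cSG set_mult_def by (auto simp: iSG_def SG_simps)
qed

lemma SG_skew_relation: "skew_relation A SG iSG cSG n \<phi> P"
  unfolding skew_relation_def
proof (intro ballI conjI)
  fix x assume x: "x \<in> carrier A"
  show "\<phi> x \<in> carrier A" using x cl by simp
  show "P x < n" using x Pn by simp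
  have e1: "(\<phi> ^^ (1 mod n)) x = \<phi> x"
  proof -
    have "(1 mod n) mod m = 1 mod m" using mdvdn by (rule mod_mod_cancel)
    from pow_cong[OF x this] show ?thesis by simp
  qed
  have e2: "sig P \<phi> x (1 mod n) mod n = P x"
  proof -
    have h1: "sig P \<phi> x 1 = P x" unfolding sig_def by simp
    have "sig P \<phi> x (1 mod n) mod n = sig P \<phi> x 1 mod n" using sig_mod[OF x, of 1] by (rule sym)
    also have "\<dots> = P x mod n" unfolding h1 ..
    also have "\<dots> = P x" using Pn[OF x] by (rule mod_less)
    finally show ?thesis .
  qed
  show "cSG \<otimes>\<^bsub>SG\<^esub> iSG x = iSG (\<phi> x) \<otimes>\<^bsub>SG\<^esub> cSG [^]\<^bsub>SG\<^esub> P x"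
  proof -
    have "cSG \<otimes>\<^bsub>SG\<^esub> iSG x = (\<one>\<^bsub>A\<^esub> \<otimes>\<^bsub>A\<^esub> (\<phi> ^^ (1 mod n)) x, (sig P \<phi> x (1 mod n) + 0) mod n)"
      unfolding cSG_def iSG_def SG_simps ..
    also have "\<dots> = ((\<phi> ^^ (1 mod n)) x, sig P \<phi> x (1 mod n) mod n)"
      using pcl[OF x] by simp
    also have "\<dots> = (\<phi> x, P x)" using e1 e2 by simp
    also have "\<dots> = iSG (\<phi> x) \<otimes>\<^bsub>SG\<^esub> (\<one>\<^bsub>A\<^esub>, P x mod n)"
      using x cl Pn[OF x] by (simp add: iSG_def SG_simps pow_one)
    finally show ?thesis unfolding cSG_pow .
  qed
qed

end

locale spG = A?: group A + G?: group G
  for A :: "('a, 'b) monoid_scheme" and G :: "('g, 'h) monoid_scheme" +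
  fixes \<iota> :: "'a \<Rightarrow> 'g" and c :: 'g and n :: nat
  assumes finA: "finite (carrier A)" and sp: "skew_product A G \<iota> c n"
begin

lemma finG: "finite (carrier G)" and ihom: "\<iota> \<in> hom A G" and iinj: "inj_on \<iota> (carrier A)"
  and cG: "c \<in> carrier G" and ordc: "G.ord c = n"
  and inter: "\<iota> ` carrier A \<inter> generate G {c} = {\<one>\<^bsub>G\<^esub>}"
  and carG: "carrier G = \<iota> ` carrier A <#>\<^bsub>G\<^esub> generate G {c}"
  using sp unfolding skew_product_def by auto

sublocale I: group_hom A G \<iota>
  by (simp add: group_hom_axioms_def group_hom_def A.group_axioms G.group_axioms ihom)

lemma npos: "0 < n" using G.ord_ge_1[OF finG cG] ordc by simp

lemma iG: "x \<in> carrier A \<Longrightarrow> \<iota> x \<in> carrier G" by simp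

lemma cpow_G: "c [^]\<^bsub>G\<^esub> (k::nat) \<in> carrier G" using cG by simp

lemma cpow_mod: "c [^]\<^bsub>G\<^esub> (k::nat) = c [^]\<^bsub>G\<^esub> (k mod n)"
proof -
  have "c [^]\<^bsub>G\<^esub> k = c [^]\<^bsub>G\<^esub> (k mod n + n * (k div n))" by simp
  also have "\<dots> = c [^]\<^bsub>G\<^esub> (k mod n) \<otimes>\<^bsub>G\<^esub> (c [^]\<^bsub>G\<^esub> n) [^]\<^bsub>G\<^esub> (k div n)"
    using G.nat_pow_mult[OF cG, of "k mod n" "n * (k div n)"] G.nat_pow_pow[OF cG, of n "k div n"] by simp
  also have "\<dots> = c [^]\<^bsub>G\<^esub> (k mod n)" using cG ordc[symmetric] by simp
  finally show ?thesis .
qed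

lemma cpow_eq_iff: "c [^]\<^bsub>G\<^esub> (a::nat) = c [^]\<^bsub>G\<^esub> (b::nat) \<longleftrightarrow> a mod n = b mod n"
proof
  assume "a mod n = b mod n" then show "c [^]\<^bsub>G\<^esub> a = c [^]\<^bsub>G\<^esub> b" using cpow_mod by metis
next
  assume "c [^]\<^bsub>G\<^esub> a = c [^]\<^bsub>G\<^esub> b"
  then have "c [^]\<^bsub>G\<^esub> (int a) = c [^]\<^bsub>G\<^esub> (int b)" by (simp add: int_pow_int)
  then have "int n dvd (int b - int a)" using G.int_pow_eq[OF cG] ordc by simp
  then show "a mod n = b mod n" by (metis of_nat_mod mod_eq_dvd_iff of_nat_eq_iff)
qed

lemma gen_c: "generate G {c} = {c [^]\<^bsub>G\<^esub> k | k. k < n}"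
proof -
  have "generate G {c} = {c [^]\<^bsub>G\<^esub> k | k. k \<in> (UNIV :: nat set)}"
    by (rule G.generate_pow_on_finite_carrier[OF finG cG])
  also have "\<dots> = {c [^]\<^bsub>G\<^esub> k | k. k < n}"
  proof (intro equalityI subsetI)
    fix g assume "g \<in> {c [^]\<^bsub>G\<^esub> k | k. k \<in> (UNIV :: nat set)}"
    then obtain k :: nat where "g = c [^]\<^bsub>G\<^esub> k" by blast
    then have "g = c [^]\<^bsub>G\<^esub> (k mod n)" "k mod n < n" using cpow_mod npos by auto
    then show "g \<in> {c [^]\<^bsub>G\<^esub> k | k. k < n}" by blast
  qed blast
  finally show ?thesis .
qed

lemma decomp: assumes g: "g \<in> carrier G"
  shows "\<exists>a k. a \<in> carrier A \<and> k < n \<and> g = \<iota> a \<otimes>\<^bsub>G\<^esub> c [^]\<^bsub>G\<^esub> k"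
proof -
  have "g \<in> \<iota> ` carrier A <#>\<^bsub>G\<^esub> {c [^]\<^bsub>G\<^esub> k | k. k < n}" using g carG gen_c by simp
  then obtain h t where "h \<in> \<iota> ` carrier A" "t \<in> {c [^]\<^bsub>G\<^esub> k | k. k < n}" "g = h \<otimes>\<^bsub>G\<^esub> t"
    unfolding set_mult_def by blast
  then show ?thesis by blast
qed

lemma gen_sub: "subgroup (generate G {c}) G"
  using G.generate_is_subgroup cG by simp

lemma cpow_gen: "c [^]\<^bsub>G\<^esub> (k::nat) \<in> generate G {c}"
  unfolding G.generate_pow_on_finite_carrier[OF finG cG] by blast

lemma iota_gen_one: "a \<in> carrier A \<Longrightarrow> \<iota> a \<in> generate G {c} \<Longrightarrow> a = \<one>\<^bsub>A\<^esub>"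
  using inter iinj by (metis A.one_closed I.hom_one IntI imageI inj_onD singletonD)

lemma uniq: assumes a: "a \<in> carrier A" and b: "b \<in> carrier A"
  and eq: "\<iota> a \<otimes>\<^bsub>G\<^esub> c [^]\<^bsub>G\<^esub> (k::nat) = \<iota> b \<otimes>\<^bsub>G\<^esub> c [^]\<^bsub>G\<^esub> (l::nat)"
  shows "a = b \<and> k mod n = l mod n"
proof -
  have e1: "inv\<^bsub>G\<^esub> (\<iota> b) \<otimes>\<^bsub>G\<^esub> \<iota> a = c [^]\<^bsub>G\<^esub> l \<otimes>\<^bsub>G\<^esub> inv\<^bsub>G\<^esub> (c [^]\<^bsub>G\<^esub> k)"
    using eq a b cG by (metis G.inv_solve_left G.inv_solve_right G.m_assoc G.m_closed G.inv_closed iG cpow_G)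
  have e2: "c [^]\<^bsub>G\<^esub> l \<otimes>\<^bsub>G\<^esub> inv\<^bsub>G\<^esub> (c [^]\<^bsub>G\<^esub> k) \<in> generate G {c}"
    using gen_sub cpow_gen by (meson subgroup.m_closed subgroup.m_inv_closed)
  have e3: "inv\<^bsub>G\<^esub> (\<iota> b) \<otimes>\<^bsub>G\<^esub> \<iota> a = \<iota> (inv\<^bsub>A\<^esub> b \<otimes>\<^bsub>A\<^esub> a)" using a b by simp
  have "\<iota> (inv\<^bsub>A\<^esub> b \<otimes>\<^bsub>A\<^esub> a) = c [^]\<^bsub>G\<^esub> l \<otimes>\<^bsub>G\<^esub> inv\<^bsub>G\<^esub> (c [^]\<^bsub>G\<^esub> k)"
    using e3[symmetric] e1 by (rule trans)
  with e2 have "\<iota> (inv\<^bsub>A\<^esub> b \<otimes>\<^bsub>A\<^esub> a) \<in> generate G {c}" by (simp only:)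
  then have "inv\<^bsub>A\<^esub> b \<otimes>\<^bsub>A\<^esub> a = \<one>\<^bsub>A\<^esub>" by (rule iota_gen_one[rotated]) (use a b in simp)
  then have ab: "a = b" using A.inv_solve_left[of "\<one>\<^bsub>A\<^esub>" b a] a b by simp
  then have "c [^]\<^bsub>G\<^esub> k = c [^]\<^bsub>G\<^esub> l" using eq a by (metis G.l_cancel iG cpow_G)
  then show ?thesis using ab cpow_eq_iff by blast
qed

lemma uniq': "a \<in> carrier A \<Longrightarrow> b \<in> carrier A \<Longrightarrow> k < n \<Longrightarrow> l < n \<Longrightarrow>
  \<iota> a \<otimes>\<^bsub>G\<^esub> c [^]\<^bsub>G\<^esub> (k::nat) = \<iota> b \<otimes>\<^bsub>G\<^esub> c [^]\<^bsub>G\<^esub> (l::nat) \<Longrightarrow> a = b \<and> k = l"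
  using uniq by fastforce

lemma part1_unique: assumes x: "x \<in> carrier A"
  shows "\<exists>!p. fst p \<in> carrier A \<and> snd p < n \<and>
          c \<otimes>\<^bsub>G\<^esub> \<iota> x = \<iota> (fst p) \<otimes>\<^bsub>G\<^esub> c [^]\<^bsub>G\<^esub> snd p"
proof -
  obtain a k where ak: "a \<in> carrier A" "k < n" "c \<otimes>\<^bsub>G\<^esub> \<iota> x = \<iota> a \<otimes>\<^bsub>G\<^esub> c [^]\<^bsub>G\<^esub> k"
    using decomp[of "c \<otimes>\<^bsub>G\<^esub> \<iota> x"] x cG G.m_closed iG by blast
  show ?thesis
  proof (rule ex1I[of _ "(a, k)"])
    show "fst (a, k) \<in> carrier A \<and> snd (a, k) < n \<and> c \<otimes>\<^bsub>G\<^esub> \<iota> x = \<iota> (fst (a, k)) \<otimes>\<^bsub>G\<^esub> c [^]\<^bsub>G\<^esub> snd (a, k)"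
      using ak by simp
  next
    fix p assume p: "fst p \<in> carrier A \<and> snd p < n \<and> c \<otimes>\<^bsub>G\<^esub> \<iota> x = \<iota> (fst p) \<otimes>\<^bsub>G\<^esub> c [^]\<^bsub>G\<^esub> snd p"
    then have "fst p = a \<and> snd p = k" using uniq'[of "fst p" a "snd p" k] ak by metis
    then show "p = (a, k)" by (simp add: prod_eq_iff)
  qed
qed

end

locale spR = spG +
  fixes \<phi> :: "'a \<Rightarrow> 'a" and P :: "'a \<Rightarrow> nat"
  assumes rel: "skew_relation A G \<iota> c n \<phi> P"
begin

lemma phicl: "x \<in> carrier A \<Longrightarrow> \<phi> x \<in> carrier A" and Pn: "x \<in> carrier A \<Longrightarrow> P x < n"
  and relx: "x \<in> carrier A \<Longrightarrow> c \<otimes>\<^bsub>G\<^esub> \<iota> x = \<iota> (\<phi> x) \<otimes>\<^bsub>G\<^esub> c [^]\<^bsub>G\<^esub> P x"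
  using rel unfolding skew_relation_def by auto

lemma ppcl: "x \<in> carrier A \<Longrightarrow> (\<phi> ^^ k) x \<in> carrier A"
  using funpow_closed[of "carrier A" \<phi>] phicl by metis

lemma cpow_rel: assumes x: "x \<in> carrier A"
  shows "c [^]\<^bsub>G\<^esub> (k::nat) \<otimes>\<^bsub>G\<^esub> \<iota> x = \<iota> ((\<phi> ^^ k) x) \<otimes>\<^bsub>G\<^esub> c [^]\<^bsub>G\<^esub> sig P \<phi> x k"
proof (induction k)
  case 0 then show ?case using x by simp
next
  case (Suc k)
  define y where "y = (\<phi> ^^ k) x"
  define s where "s = sig P \<phi> x k"
  have y: "y \<in> carrier A" using ppcl x y_def by simp
  have "c [^]\<^bsub>G\<^esub> Suc k \<otimes>\<^bsub>G\<^esub> \<iota> x = c \<otimes>\<^bsub>G\<^esub> (c [^]\<^bsub>G\<^esub> k \<otimes>\<^bsub>G\<^esub> \<iota> x)"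
    unfolding G.nat_pow_Suc2[OF cG] by (rule G.m_assoc[OF cG cpow_G iG[OF x]])
  also have "\<dots> = c \<otimes>\<^bsub>G\<^esub> (\<iota> y \<otimes>\<^bsub>G\<^esub> c [^]\<^bsub>G\<^esub> s)" using Suc y_def s_def by simp
  also have "\<dots> = (c \<otimes>\<^bsub>G\<^esub> \<iota> y) \<otimes>\<^bsub>G\<^esub> c [^]\<^bsub>G\<^esub> s" using cG y by (simp add: G.m_assoc)
  also have "\<dots> = (\<iota> (\<phi> y) \<otimes>\<^bsub>G\<^esub> c [^]\<^bsub>G\<^esub> P y) \<otimes>\<^bsub>G\<^esub> c [^]\<^bsub>G\<^esub> s" using relx[OF y] by simp
  also have "\<dots> = \<iota> (\<phi> y) \<otimes>\<^bsub>G\<^esub> c [^]\<^bsub>G\<^esub> (P y + s)"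
    using cG y phicl[OF y] by (simp add: G.m_assoc G.nat_pow_mult)
  also have "\<phi> y = (\<phi> ^^ Suc k) x" by (simp add: y_def)
  also have "P y + s = sig P \<phi> x (Suc k)" by (simp add: sig_Suc y_def s_def)
  finally show ?case .
qed

lemma prodform: assumes a: "a \<in> carrier A" and b: "b \<in> carrier A"
  shows "(\<iota> a \<otimes>\<^bsub>G\<^esub> c [^]\<^bsub>G\<^esub> (k::nat)) \<otimes>\<^bsub>G\<^esub> (\<iota> b \<otimes>\<^bsub>G\<^esub> c [^]\<^bsub>G\<^esub> (l::nat))
     = \<iota> (a \<otimes>\<^bsub>A\<^esub> (\<phi> ^^ k) b) \<otimes>\<^bsub>G\<^esub> c [^]\<^bsub>G\<^esub> (sig P \<phi> b k + l)"
proof -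
  have "(\<iota> a \<otimes>\<^bsub>G\<^esub> c [^]\<^bsub>G\<^esub> k) \<otimes>\<^bsub>G\<^esub> (\<iota> b \<otimes>\<^bsub>G\<^esub> c [^]\<^bsub>G\<^esub> l)
      = \<iota> a \<otimes>\<^bsub>G\<^esub> ((c [^]\<^bsub>G\<^esub> k \<otimes>\<^bsub>G\<^esub> \<iota> b) \<otimes>\<^bsub>G\<^esub> c [^]\<^bsub>G\<^esub> l)"
    using a b cG by (simp add: G.m_assoc)
  also have "\<dots> = \<iota> a \<otimes>\<^bsub>G\<^esub> ((\<iota> ((\<phi> ^^ k) b) \<otimes>\<^bsub>G\<^esub> c [^]\<^bsub>G\<^esub> sig P \<phi> b k) \<otimes>\<^bsub>G\<^esub> c [^]\<^bsub>G\<^esub> l)"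
    using cpow_rel[OF b] by simp
  also have "\<dots> = (\<iota> a \<otimes>\<^bsub>G\<^esub> \<iota> ((\<phi> ^^ k) b)) \<otimes>\<^bsub>G\<^esub> (c [^]\<^bsub>G\<^esub> sig P \<phi> b k \<otimes>\<^bsub>G\<^esub> c [^]\<^bsub>G\<^esub> l)"
    using a ppcl[OF b] cG by (simp add: G.m_assoc)
  also have "\<dots> = \<iota> (a \<otimes>\<^bsub>A\<^esub> (\<phi> ^^ k) b) \<otimes>\<^bsub>G\<^esub> c [^]\<^bsub>G\<^esub> (sig P \<phi> b k + l)"
    using a ppcl[OF b] cG by (simp add: G.nat_pow_mult)
  finally show ?thesis .
qed

lemma multrel: assumes x: "x \<in> carrier A" and y: "y \<in> carrier A"
  shows "\<phi> (x \<otimes>\<^bsub>A\<^esub> y) = \<phi> x \<otimes>\<^bsub>A\<^esub> (\<phi> ^^ P x) y \<and> P (x \<otimes>\<^bsub>A\<^esub> y) = sig P \<phi> y (P x) mod n"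
proof -
  have xy: "x \<otimes>\<^bsub>A\<^esub> y \<in> carrier A" using x y by simp
  have "\<iota> (\<phi> (x \<otimes>\<^bsub>A\<^esub> y)) \<otimes>\<^bsub>G\<^esub> c [^]\<^bsub>G\<^esub> P (x \<otimes>\<^bsub>A\<^esub> y) = c \<otimes>\<^bsub>G\<^esub> \<iota> (x \<otimes>\<^bsub>A\<^esub> y)"
    using relx[OF xy] by simp
  also have "\<dots> = (c \<otimes>\<^bsub>G\<^esub> \<iota> x) \<otimes>\<^bsub>G\<^esub> \<iota> y" using x y cG by (simp add: G.m_assoc)
  also have "\<dots> = (\<iota> (\<phi> x) \<otimes>\<^bsub>G\<^esub> c [^]\<^bsub>G\<^esub> P x) \<otimes>\<^bsub>G\<^esub> (\<iota> y \<otimes>\<^bsub>G\<^esub> c [^]\<^bsub>G\<^esub> (0::nat))"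
    using relx[OF x] y by simp
  also have "\<dots> = \<iota> (\<phi> x \<otimes>\<^bsub>A\<^esub> (\<phi> ^^ P x) y) \<otimes>\<^bsub>G\<^esub> c [^]\<^bsub>G\<^esub> (sig P \<phi> y (P x) + 0)"
    by (rule prodform[OF phicl[OF x] y])
  also have "\<dots> = \<iota> (\<phi> x \<otimes>\<^bsub>A\<^esub> (\<phi> ^^ P x) y) \<otimes>\<^bsub>G\<^esub> c [^]\<^bsub>G\<^esub> (sig P \<phi> y (P x) mod n)"
    using cpow_mod by simp
  finally show ?thesis
    using uniq'[OF phicl[OF xy] _ Pn[OF xy], of "\<phi> x \<otimes>\<^bsub>A\<^esub> (\<phi> ^^ P x) y" "sig P \<phi> y (P x) mod n"]
      phicl[OF x] ppcl[OF y] npos by simp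
qed

lemma onerel: "\<phi> \<one>\<^bsub>A\<^esub> = \<one>\<^bsub>A\<^esub> \<and> P \<one>\<^bsub>A\<^esub> = 1 mod n"
proof -
  have "\<iota> (\<phi> \<one>\<^bsub>A\<^esub>) \<otimes>\<^bsub>G\<^esub> c [^]\<^bsub>G\<^esub> P \<one>\<^bsub>A\<^esub> = c \<otimes>\<^bsub>G\<^esub> \<iota> \<one>\<^bsub>A\<^esub>"
    using relx[of "\<one>\<^bsub>A\<^esub>"] by simp
  also have "\<dots> = \<iota> \<one>\<^bsub>A\<^esub> \<otimes>\<^bsub>G\<^esub> c [^]\<^bsub>G\<^esub> (1::nat)" using cG by simp
  also have "\<dots> = \<iota> \<one>\<^bsub>A\<^esub> \<otimes>\<^bsub>G\<^esub> c [^]\<^bsub>G\<^esub> (1 mod n)" using cpow_mod by metis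
  finally show ?thesis
    using uniq'[OF phicl[OF A.one_closed] A.one_closed Pn[OF A.one_closed], of "1 mod n"] npos by simp
qed

lemma phi_one_imp: assumes u: "u \<in> carrier A" and e: "\<phi> u = \<one>\<^bsub>A\<^esub>" shows "u = \<one>\<^bsub>A\<^esub>"
proof -
  have "c \<otimes>\<^bsub>G\<^esub> \<iota> u = c [^]\<^bsub>G\<^esub> P u" using relx[OF u] e cG by simp
  then have "\<iota> u = inv\<^bsub>G\<^esub> c \<otimes>\<^bsub>G\<^esub> c [^]\<^bsub>G\<^esub> P u"
    using u cG by (metis G.inv_solve_left iG cpow_G)
  moreover have "inv\<^bsub>G\<^esub> c \<otimes>\<^bsub>G\<^esub> c [^]\<^bsub>G\<^esub> P u \<in> generate G {c}"
    using gen_sub cpow_gen[of 1] cpow_gen[of "P u"] cG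
    by (metis G.nat_pow_eone subgroup.m_closed subgroup.m_inv_closed)
  ultimately have "\<iota> u \<in> generate G {c}" by (simp only:)
  then show ?thesis by (rule iota_gen_one[OF u])
qed

lemma phipow_one_imp: "u \<in> carrier A \<Longrightarrow> (\<phi> ^^ k) u = \<one>\<^bsub>A\<^esub> \<Longrightarrow> u = \<one>\<^bsub>A\<^esub>"
proof (induction k)
  case (Suc k)
  then show ?case using phi_one_imp[OF ppcl[OF Suc.prems(1), of k]] by simp
qed simp

lemma phi_inj: "inj_on \<phi> (carrier A)"
proof (rule inj_onI)
  fix x y assume x: "x \<in> carrier A" and y: "y \<in> carrier A" and e: "\<phi> x = \<phi> y"
  define u where "u = inv\<^bsub>A\<^esub> x \<otimes>\<^bsub>A\<^esub> y"
  have u: "u \<in> carrier A" using x y u_def by simp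
  have yu: "y = x \<otimes>\<^bsub>A\<^esub> u" using x y u_def by (simp add: A.m_assoc[symmetric])
  have "\<phi> x \<otimes>\<^bsub>A\<^esub> (\<phi> ^^ P x) u = \<phi> x \<otimes>\<^bsub>A\<^esub> \<one>\<^bsub>A\<^esub>"
    using multrel[OF x u] yu e phicl[OF x] by simp
  then have "(\<phi> ^^ P x) u = \<one>\<^bsub>A\<^esub>" using A.l_cancel phicl[OF x] ppcl[OF u] A.one_closed by blast
  then have "u = \<one>\<^bsub>A\<^esub>" using phipow_one_imp u by blast
  then show "x = y" using yu x by simp
qed

lemma phi_bij: "bij_betw \<phi> (carrier A) (carrier A)"
proof -
  have "\<phi> ` carrier A \<subseteq> carrier A" using phicl by blast
  then have "\<phi> ` carrier A = carrier A" using endo_inj_surj[OF finA _ phi_inj] by blast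
  then show ?thesis using phi_inj by (simp add: bij_betw_def)
qed

lemma period: assumes x: "x \<in> carrier A" shows "(\<phi> ^^ n) x = x" "sig P \<phi> x n mod n = 0"
proof -
  have "\<iota> ((\<phi> ^^ n) x) \<otimes>\<^bsub>G\<^esub> c [^]\<^bsub>G\<^esub> sig P \<phi> x n = c [^]\<^bsub>G\<^esub> n \<otimes>\<^bsub>G\<^esub> \<iota> x"
    using cpow_rel[OF x] by simp
  also have "\<dots> = \<iota> x \<otimes>\<^bsub>G\<^esub> c [^]\<^bsub>G\<^esub> (0::nat)" using x cG ordc[symmetric] by simp
  finally have "(\<phi> ^^ n) x = x \<and> sig P \<phi> x n mod n = 0 mod n"
    using uniq[OF ppcl[OF x] x] by blast
  then show "(\<phi> ^^ n) x = x" "sig P \<phi> x n mod n = 0" by auto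
qed

sublocale PA: permA A \<phi> by (simp add: permA_def finA phi_bij)

lemma m_dvd_n: "PA.m dvd n" using PA.m_dvd period(1) by blast

lemma is_skew: "skew_morphism A \<phi>" and is_ext: "ext_power_function A \<phi> n P"
proof -
  define \<pi> where "\<pi> x = P x mod PA.m" for x
  have pf: "power_function A \<phi> \<pi>"
    unfolding power_function_def
  proof (intro conjI ballI)
    fix x assume "x \<in> carrier A" then show "\<pi> x < PA.m" using PA.m_props(1) by (simp add: \<pi>_def)
  next
    fix x y assume x: "x \<in> carrier A" and y: "y \<in> carrier A"
    have "\<phi> (x \<otimes>\<^bsub>A\<^esub> y) = \<phi> x \<otimes>\<^bsub>A\<^esub> (\<phi> ^^ P x) y" using multrel[OF x y] by blast
    also have "(\<phi> ^^ P x) y = (\<phi> ^^ \<pi> x) y" using PA.pow_mod[OF y] by (simp add: \<pi>_def)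
    finally show "\<phi> (x \<otimes>\<^bsub>A\<^esub> y) = \<phi> x \<otimes>\<^bsub>A\<^esub> (\<phi> ^^ \<pi> x) y" .
  qed
  show "skew_morphism A \<phi>" unfolding skew_morphism_def using phi_bij onerel pf by blast
  show "ext_power_function A \<phi> n P"
    unfolding ext_power_function_def
  proof (intro conjI ballI)
    show "0 < n" by (rule npos)
    show "PA.m dvd n" by (rule m_dvd_n)
    show "\<And>x. x \<in> carrier A \<Longrightarrow> P x < n" by (rule Pn)
    show "\<exists>\<pi>. power_function A \<phi> \<pi> \<and> (\<forall>x\<in>carrier A. P x mod PA.m = \<pi> x)"
      using pf by (intro exI[of _ \<pi>]) (simp add: \<pi>_def)
    show "P \<one>\<^bsub>A\<^esub> mod n = 1 mod n" using onerel by simp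
  next
    fix x y assume x: "x \<in> carrier A" and y: "y \<in> carrier A"
    have "P (x \<otimes>\<^bsub>A\<^esub> y) = sig P \<phi> y (P x) mod n" using multrel[OF x y] by blast
    then show "P (x \<otimes>\<^bsub>A\<^esub> y) mod n = (\<Sum>i<P x. P ((\<phi> ^^ i) y)) mod n"
      unfolding sig_def by simp
  qed
qed

end

locale two = S1: spR A G1 \<iota>1 c1 n \<phi>1 P1 + S2: spR A G2 \<iota>2 c2 n \<phi>2 P2
  for A :: "('a, 'b) monoid_scheme" and G1 :: "('c, 'd) monoid_scheme" and \<iota>1 c1 n \<phi>1 P1
    and G2 :: "('e, 'f) monoid_scheme" and \<iota>2 c2 \<phi>2 P2
begin

lemma fwd:
  assumes iso: "\<Psi> \<in> iso G1 G2" and img: "\<Psi> ` (\<iota>1 ` carrier A) = \<iota>2 ` carrier A" and pc: "\<Psi> c1 = c2"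
  shows "\<exists>\<theta>. \<theta> \<in> iso A A \<and>
          (\<forall>x\<in>carrier A. \<phi>2 x = \<theta> (\<phi>1 (inv_into (carrier A) \<theta> x)) \<and>
                          P2 x = P1 (inv_into (carrier A) \<theta> x))"
proof -
  have hom: "\<Psi> \<in> hom G1 G2" and bij: "bij_betw \<Psi> (carrier G1) (carrier G2)" using iso by (auto simp: iso_def)
  interpret H: group_hom G1 G2 \<Psi>
    by (simp add: group_hom_axioms_def group_hom_def S1.G.group_axioms S2.G.group_axioms hom)
  define \<theta> where "\<theta> x = inv_into (carrier A) \<iota>2 (\<Psi> (\<iota>1 x))" for x
  have th: "\<theta> x \<in> carrier A \<and> \<iota>2 (\<theta> x) = \<Psi> (\<iota>1 x)" if x: "x \<in> carrier A" for x
  proof -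
    have "\<Psi> (\<iota>1 x) \<in> \<iota>2 ` carrier A" using img x by blast
    then show ?thesis unfolding \<theta>_def by (simp add: inv_into_into f_inv_into_f)
  qed
  have thmult: "\<theta> (x \<otimes>\<^bsub>A\<^esub> y) = \<theta> x \<otimes>\<^bsub>A\<^esub> \<theta> y" if x: "x \<in> carrier A" and y: "y \<in> carrier A" for x y
  proof -
    have "\<iota>2 (\<theta> (x \<otimes>\<^bsub>A\<^esub> y)) = \<Psi> (\<iota>1 x \<otimes>\<^bsub>G1\<^esub> \<iota>1 y)" using th[of "x \<otimes>\<^bsub>A\<^esub> y"] x y by simp
    also have "\<dots> = \<Psi> (\<iota>1 x) \<otimes>\<^bsub>G2\<^esub> \<Psi> (\<iota>1 y)" using x y by simp
    also have "\<dots> = \<iota>2 (\<theta> x \<otimes>\<^bsub>A\<^esub> \<theta> y)" using th[OF x] th[OF y] by simp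
    finally show ?thesis using S2.iinj th[OF x] th[OF y] th[of "x \<otimes>\<^bsub>A\<^esub> y"] x y
      by (meson S1.A.m_closed inj_onD)
  qed
  have thinj: "inj_on \<theta> (carrier A)"
  proof (rule inj_onI)
    fix x y assume x: "x \<in> carrier A" and y: "y \<in> carrier A" and e: "\<theta> x = \<theta> y"
    then have "\<Psi> (\<iota>1 x) = \<Psi> (\<iota>1 y)" using th[OF x] th[OF y] by simp
    then have "\<iota>1 x = \<iota>1 y" using bij x y unfolding bij_betw_def by (meson S1.iG inj_onD)
    then show "x = y" using S1.iinj x y by (meson inj_onD)
  qed
  have thsurj: "\<theta> ` carrier A = carrier A"
  proof (intro equalityI subsetI)
    fix z assume "z \<in> \<theta> ` carrier A" then show "z \<in> carrier A" using th by blast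
  next
    fix z assume z: "z \<in> carrier A"
    then have "\<iota>2 z \<in> \<Psi> ` (\<iota>1 ` carrier A)" using img by blast
    then obtain x where x: "x \<in> carrier A" "\<iota>2 z = \<Psi> (\<iota>1 x)" by blast
    then have "\<iota>2 z = \<iota>2 (\<theta> x)" using th[OF x(1)] by simp
    then have "z = \<theta> x" using S2.iinj z th[OF x(1)] by (meson inj_onD)
    then show "z \<in> \<theta> ` carrier A" using x by blast
  qed
  have thiso: "\<theta> \<in> iso A A"
    by (rule isoI) (auto intro!: homI simp: th thmult bij_betw_def thinj thsurj)
  have key: "\<phi>2 (\<theta> x) = \<theta> (\<phi>1 x) \<and> P2 (\<theta> x) = P1 x" if x: "x \<in> carrier A" for x
  proof -
    have tx: "\<theta> x \<in> carrier A" using th[OF x] by simp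
    have "\<iota>2 (\<phi>2 (\<theta> x)) \<otimes>\<^bsub>G2\<^esub> c2 [^]\<^bsub>G2\<^esub> P2 (\<theta> x) = c2 \<otimes>\<^bsub>G2\<^esub> \<iota>2 (\<theta> x)"
      using S2.relx[OF tx] by simp
    also have "\<dots> = \<Psi> (c1 \<otimes>\<^bsub>G1\<^esub> \<iota>1 x)" using th[OF x] pc x S1.cG by simp
    also have "\<dots> = \<Psi> (\<iota>1 (\<phi>1 x) \<otimes>\<^bsub>G1\<^esub> c1 [^]\<^bsub>G1\<^esub> P1 x)" using S1.relx[OF x] by simp
    also have "\<dots> = \<Psi> (\<iota>1 (\<phi>1 x)) \<otimes>\<^bsub>G2\<^esub> \<Psi> c1 [^]\<^bsub>G2\<^esub> P1 x"
      using S1.phicl[OF x] S1.cG by (simp add: H.hom_nat_pow)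
    also have "\<dots> = \<iota>2 (\<theta> (\<phi>1 x)) \<otimes>\<^bsub>G2\<^esub> c2 [^]\<^bsub>G2\<^esub> P1 x" using th[OF S1.phicl[OF x]] pc by simp
    finally show ?thesis
      using S2.uniq'[OF S2.phicl[OF tx] _ S2.Pn[OF tx] S1.Pn[OF x]] th[OF S1.phicl[OF x]] by blast
  qed
  show ?thesis
  proof (intro exI conjI ballI)
    show "\<theta> \<in> iso A A" by (rule thiso)
  next
    fix z assume z: "z \<in> carrier A"
    define y where "y = inv_into (carrier A) \<theta> z"
    have y: "y \<in> carrier A" "\<theta> y = z" using z thsurj unfolding y_def by (auto simp: inv_into_into f_inv_into_f)
    show "\<phi>2 z = \<theta> (\<phi>1 (inv_into (carrier A) \<theta> z))" using key[OF y(1)] y(2) y_def by simp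
    show "P2 z = P1 (inv_into (carrier A) \<theta> z)" using key[OF y(1)] y(2) y_def by simp
  qed
qed

end

context two begin

lemma bwd:
  assumes thiso: "\<theta> \<in> iso A A"
    and cond: "\<forall>x\<in>carrier A. \<phi>2 x = \<theta> (\<phi>1 (inv_into (carrier A) \<theta> x)) \<and>
                          P2 x = P1 (inv_into (carrier A) \<theta> x)"
  shows "\<exists>\<Psi>. \<Psi> \<in> iso G1 G2 \<and> \<Psi> ` (\<iota>1 ` carrier A) = \<iota>2 ` carrier A \<and> \<Psi> c1 = c2"
proof -
  have thhom: "\<theta> \<in> hom A A" and thbij: "bij_betw \<theta> (carrier A) (carrier A)" using thiso by (auto simp: iso_def)
  have thinj: "inj_on \<theta> (carrier A)" and thsurj: "\<theta> ` carrier A = carrier A" using thbij by (auto simp: bij_betw_def)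
  have thc: "\<theta> x \<in> carrier A" if "x \<in> carrier A" for x using thhom that by (simp add: hom_in_carrier)
  have thmul: "\<theta> (x \<otimes>\<^bsub>A\<^esub> y) = \<theta> x \<otimes>\<^bsub>A\<^esub> \<theta> y" if "x \<in> carrier A" "y \<in> carrier A" for x y
    using thhom that by (simp add: hom_mult)
  have th1: "\<theta> \<one>\<^bsub>A\<^esub> = \<one>\<^bsub>A\<^esub>" using hom_one[OF thhom S1.A.group_axioms S1.A.group_axioms] .
  have key: "\<phi>2 (\<theta> y) = \<theta> (\<phi>1 y) \<and> P2 (\<theta> y) = P1 y" if y: "y \<in> carrier A" for y
    using cond thc[OF y] inv_into_f_f[OF thinj y] by simp
  have powc: "\<theta> ((\<phi>1 ^^ k) y) = (\<phi>2 ^^ k) (\<theta> y)" if y: "y \<in> carrier A" for y k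
  proof (induction k)
    case (Suc k)
    then show ?case using key[OF S1.ppcl[OF y, of k]] by simp
  qed simp
  have sigc: "sig P2 \<phi>2 (\<theta> y) k = sig P1 \<phi>1 y k" if y: "y \<in> carrier A" for y k
    unfolding sig_def
  proof (rule sum.cong[OF refl])
    fix i assume "i \<in> {..<k}"
    show "P2 ((\<phi>2 ^^ i) (\<theta> y)) = P1 ((\<phi>1 ^^ i) y)"
      using powc[OF y, of i, symmetric] key[OF S1.ppcl[OF y, of i]] by simp
  qed
  define dec where "dec g = (SOME p. fst p \<in> carrier A \<and> snd p < n \<and> g = \<iota>1 (fst p) \<otimes>\<^bsub>G1\<^esub> c1 [^]\<^bsub>G1\<^esub> snd p)" for g
  define \<Psi> where "\<Psi> g = \<iota>2 (\<theta> (fst (dec g))) \<otimes>\<^bsub>G2\<^esub> c2 [^]\<^bsub>G2\<^esub> snd (dec g)" for g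
  have Psi_eq: "\<Psi> (\<iota>1 a \<otimes>\<^bsub>G1\<^esub> c1 [^]\<^bsub>G1\<^esub> k) = \<iota>2 (\<theta> a) \<otimes>\<^bsub>G2\<^esub> c2 [^]\<^bsub>G2\<^esub> k"
    if a: "a \<in> carrier A" and k: "k < n" for a k
  proof -
    let ?g = "\<iota>1 a \<otimes>\<^bsub>G1\<^esub> c1 [^]\<^bsub>G1\<^esub> k"
    have "fst (dec ?g) \<in> carrier A \<and> snd (dec ?g) < n \<and> ?g = \<iota>1 (fst (dec ?g)) \<otimes>\<^bsub>G1\<^esub> c1 [^]\<^bsub>G1\<^esub> snd (dec ?g)"
      unfolding dec_def by (rule someI[of _ "(a, k)"]) (use a k in simp)
    then have "fst (dec ?g) = a \<and> snd (dec ?g) = k" using S1.uniq'[OF _ a _ k] by metis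
    then show ?thesis unfolding \<Psi>_def by simp
  qed
  have Psi_cl: "\<Psi> g \<in> carrier G2" if g: "g \<in> carrier G1" for g
  proof -
    obtain a k where "a \<in> carrier A" "k < n" "g = \<iota>1 a \<otimes>\<^bsub>G1\<^esub> c1 [^]\<^bsub>G1\<^esub> k" using S1.decomp[OF g] by blast
    then show ?thesis using Psi_eq thc S2.iG S2.cpow_G by simp
  qed
  have Psi_hom: "\<Psi> \<in> hom G1 G2"
  proof (rule homI)
    show "\<And>x. x \<in> carrier G1 \<Longrightarrow> \<Psi> x \<in> carrier G2" by (rule Psi_cl)
    fix g h assume g: "g \<in> carrier G1" and h: "h \<in> carrier G1"
    obtain a k where a: "a \<in> carrier A" "k < n" "g = \<iota>1 a \<otimes>\<^bsub>G1\<^esub> c1 [^]\<^bsub>G1\<^esub> k" using S1.decomp[OF g] by blast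
    obtain b l where b: "b \<in> carrier A" "l < n" "h = \<iota>1 b \<otimes>\<^bsub>G1\<^esub> c1 [^]\<^bsub>G1\<^esub> l" using S1.decomp[OF h] by blast
    have ab: "a \<otimes>\<^bsub>A\<^esub> (\<phi>1 ^^ k) b \<in> carrier A" using a b S1.ppcl by simp
    have "g \<otimes>\<^bsub>G1\<^esub> h = \<iota>1 (a \<otimes>\<^bsub>A\<^esub> (\<phi>1 ^^ k) b) \<otimes>\<^bsub>G1\<^esub> c1 [^]\<^bsub>G1\<^esub> (sig P1 \<phi>1 b k + l)"
      using S1.prodform[OF a(1) b(1)] a b by simp
    also have "\<dots> = \<iota>1 (a \<otimes>\<^bsub>A\<^esub> (\<phi>1 ^^ k) b) \<otimes>\<^bsub>G1\<^esub> c1 [^]\<^bsub>G1\<^esub> ((sig P1 \<phi>1 b k + l) mod n)"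
      using S1.cpow_mod by metis
    finally have "\<Psi> (g \<otimes>\<^bsub>G1\<^esub> h) = \<iota>2 (\<theta> (a \<otimes>\<^bsub>A\<^esub> (\<phi>1 ^^ k) b)) \<otimes>\<^bsub>G2\<^esub> c2 [^]\<^bsub>G2\<^esub> ((sig P1 \<phi>1 b k + l) mod n)"
      using Psi_eq[OF ab] S1.npos by simp
    also have "\<dots> = \<iota>2 (\<theta> a \<otimes>\<^bsub>A\<^esub> (\<phi>2 ^^ k) (\<theta> b)) \<otimes>\<^bsub>G2\<^esub> c2 [^]\<^bsub>G2\<^esub> (sig P2 \<phi>2 (\<theta> b) k + l)"
      using thmul[OF a(1) S1.ppcl[OF b(1)]] powc[OF b(1)] sigc[OF b(1)] S2.cpow_mod by metis
    also have "\<dots> = (\<iota>2 (\<theta> a) \<otimes>\<^bsub>G2\<^esub> c2 [^]\<^bsub>G2\<^esub> k) \<otimes>\<^bsub>G2\<^esub> (\<iota>2 (\<theta> b) \<otimes>\<^bsub>G2\<^esub> c2 [^]\<^bsub>G2\<^esub> l)"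
      using S2.prodform[OF thc[OF a(1)] thc[OF b(1)]] by simp
    also have "\<dots> = \<Psi> g \<otimes>\<^bsub>G2\<^esub> \<Psi> h" using Psi_eq a b by simp
    finally show "\<Psi> (g \<otimes>\<^bsub>G1\<^esub> h) = \<Psi> g \<otimes>\<^bsub>G2\<^esub> \<Psi> h" .
  qed
  have Psi_inj: "inj_on \<Psi> (carrier G1)"
  proof (rule inj_onI)
    fix g h assume g: "g \<in> carrier G1" and h: "h \<in> carrier G1" and e: "\<Psi> g = \<Psi> h"
    obtain a k where a: "a \<in> carrier A" "k < n" "g = \<iota>1 a \<otimes>\<^bsub>G1\<^esub> c1 [^]\<^bsub>G1\<^esub> k" using S1.decomp[OF g] by blast
    obtain b l where b: "b \<in> carrier A" "l < n" "h = \<iota>1 b \<otimes>\<^bsub>G1\<^esub> c1 [^]\<^bsub>G1\<^esub> l" using S1.decomp[OF h] by blast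
    have "\<iota>2 (\<theta> a) \<otimes>\<^bsub>G2\<^esub> c2 [^]\<^bsub>G2\<^esub> k = \<iota>2 (\<theta> b) \<otimes>\<^bsub>G2\<^esub> c2 [^]\<^bsub>G2\<^esub> l"
      using e a b Psi_eq by simp
    then have "\<theta> a = \<theta> b \<and> k = l" using S2.uniq'[OF thc[OF a(1)] thc[OF b(1)] a(2) b(2)] by blast
    then have "a = b \<and> k = l" using thinj a(1) b(1) by (meson inj_onD)
    then show "g = h" using a b by simp
  qed
  have Psi_surj: "\<Psi> ` carrier G1 = carrier G2"
  proof (intro equalityI subsetI)
    fix y assume "y \<in> \<Psi> ` carrier G1" then show "y \<in> carrier G2" using Psi_cl by blast
  next
    fix y assume y: "y \<in> carrier G2"
    obtain z k where z: "z \<in> carrier A" "k < n" "y = \<iota>2 z \<otimes>\<^bsub>G2\<^esub> c2 [^]\<^bsub>G2\<^esub> k" using S2.decomp[OF y] by blast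
    obtain a where a: "a \<in> carrier A" "z = \<theta> a" using z(1) thsurj by blast
    have "y = \<Psi> (\<iota>1 a \<otimes>\<^bsub>G1\<^esub> c1 [^]\<^bsub>G1\<^esub> k)" using Psi_eq[OF a(1) z(2)] z a by simp
    moreover have "\<iota>1 a \<otimes>\<^bsub>G1\<^esub> c1 [^]\<^bsub>G1\<^esub> k \<in> carrier G1" using a S1.iG S1.cpow_G by simp
    ultimately show "y \<in> \<Psi> ` carrier G1" by blast
  qed
  have Psi_iota: "\<Psi> (\<iota>1 a) = \<iota>2 (\<theta> a)" if a: "a \<in> carrier A" for a
    using Psi_eq[OF a S1.npos] a thc[OF a] by simp
  have img: "\<Psi> ` (\<iota>1 ` carrier A) = \<iota>2 ` carrier A"
  proof -
    have "\<Psi> ` (\<iota>1 ` carrier A) = \<iota>2 ` (\<theta> ` carrier A)" using Psi_iota by (auto simp: image_image)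
    then show ?thesis using thsurj by simp
  qed
  have pc: "\<Psi> c1 = c2"
  proof -
    have "c1 = \<iota>1 \<one>\<^bsub>A\<^esub> \<otimes>\<^bsub>G1\<^esub> c1 [^]\<^bsub>G1\<^esub> (1 mod n)"
      using S1.cpow_mod[of 1] S1.cG by simp
    then have "\<Psi> c1 = \<iota>2 (\<theta> \<one>\<^bsub>A\<^esub>) \<otimes>\<^bsub>G2\<^esub> c2 [^]\<^bsub>G2\<^esub> (1 mod n)"
      using Psi_eq[of "\<one>\<^bsub>A\<^esub>" "1 mod n"] S1.npos by simp
    also have "\<dots> = c2" using th1 S2.cpow_mod[of 1] S2.cG by simp
    finally show ?thesis .
  qed
  show ?thesis using Psi_hom Psi_inj Psi_surj img pc
    by (intro exI[of _ \<Psi>]) (simp add: iso_def bij_betw_def)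
qed

end

theorem theorem1p1:
  fixes A :: "('a, 'b) monoid_scheme"
  assumes "group A" and "finite (carrier A)"
  shows
  "(\<forall>(G :: ('g, 'h) monoid_scheme) \<iota> c n. skew_product A G \<iota> c n \<longrightarrow>
      (\<forall>x\<in>carrier A. \<exists>!p. fst p \<in> carrier A \<and> snd p < n \<and>
          c \<otimes>\<^bsub>G\<^esub> \<iota> x = \<iota> (fst p) \<otimes>\<^bsub>G\<^esub> c [^]\<^bsub>G\<^esub> snd p) \<and>
      (\<forall>\<phi> P. skew_relation A G \<iota> c n \<phi> P \<longrightarrow>
          skew_morphism A \<phi> \<and> ext_power_function A \<phi> n P))
   \<and>
   (\<forall>\<phi> P n. skew_morphism A \<phi> \<and> ext_power_function A \<phi> n P \<longrightarrow>
      (\<exists>(G :: ('a \<times> nat) monoid) \<iota> c.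
          skew_product A G \<iota> c n \<and> skew_relation A G \<iota> c n \<phi> P))
   \<and>
   (\<forall>\<phi>1 P1 \<phi>2 P2 n (G1 :: ('c, 'd) monoid_scheme) \<iota>1 c1 (G2 :: ('e, 'f) monoid_scheme) \<iota>2 c2.
      skew_morphism A \<phi>1 \<and> ext_power_function A \<phi>1 n P1 \<and>
      skew_morphism A \<phi>2 \<and> ext_power_function A \<phi>2 n P2 \<and>
      skew_product A G1 \<iota>1 c1 n \<and> skew_relation A G1 \<iota>1 c1 n \<phi>1 P1 \<and>
      skew_product A G2 \<iota>2 c2 n \<and> skew_relation A G2 \<iota>2 c2 n \<phi>2 P2 \<longrightarrow>
      ((\<exists>\<Psi>. \<Psi> \<in> iso G1 G2 \<and> \<Psi> ` (\<iota>1 ` carrier A) = \<iota>2 ` carrier A \<and> \<Psi> c1 = c2)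
       \<longleftrightarrow>
       (\<exists>\<theta>. \<theta> \<in> iso A A \<and>
          (\<forall>x\<in>carrier A. \<phi>2 x = \<theta> (\<phi>1 (inv_into (carrier A) \<theta> x)) \<and>
                          P2 x = P1 (inv_into (carrier A) \<theta> x)))))"
proof (intro conjI)
  show "\<forall>(G :: ('g, 'h) monoid_scheme) \<iota> c n. skew_product A G \<iota> c n \<longrightarrow>
      (\<forall>x\<in>carrier A. \<exists>!p. fst p \<in> carrier A \<and> snd p < n \<and>
          c \<otimes>\<^bsub>G\<^esub> \<iota> x = \<iota> (fst p) \<otimes>\<^bsub>G\<^esub> c [^]\<^bsub>G\<^esub> snd p) \<and>
      (\<forall>\<phi> P. skew_relation A G \<iota> c n \<phi> P \<longrightarrow>
          skew_morphism A \<phi> \<and> ext_power_function A \<phi> n P)"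
  proof (intro allI impI)
  fix G :: "('g, 'h) monoid_scheme" and \<iota> c n
  assume sp: "skew_product A G \<iota> c n"
  have grG: "group G" using sp unfolding skew_product_def by blast
  interpret S: spG A G \<iota> c n
    by (simp add: spG_def spG_axioms_def assms grG sp)
  have p1: "\<forall>x\<in>carrier A. \<exists>!p. fst p \<in> carrier A \<and> snd p < n \<and>
          c \<otimes>\<^bsub>G\<^esub> \<iota> x = \<iota> (fst p) \<otimes>\<^bsub>G\<^esub> c [^]\<^bsub>G\<^esub> snd p"
    using S.part1_unique by blast
  have p2: "\<forall>\<phi> P. skew_relation A G \<iota> c n \<phi> P \<longrightarrow> skew_morphism A \<phi> \<and> ext_power_function A \<phi> n P"
  proof (intro allI impI)
    fix \<phi> P assume r: "skew_relation A G \<iota> c n \<phi> P"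
    interpret R: spR A G \<iota> c n \<phi> P
      by (simp add: spR_def spR_axioms_def S.spG_axioms r)
    show "skew_morphism A \<phi> \<and> ext_power_function A \<phi> n P" using R.is_skew R.is_ext by blast
  qed
  show "(\<forall>x\<in>carrier A. \<exists>!p. fst p \<in> carrier A \<and> snd p < n \<and>
          c \<otimes>\<^bsub>G\<^esub> \<iota> x = \<iota> (fst p) \<otimes>\<^bsub>G\<^esub> c [^]\<^bsub>G\<^esub> snd p) \<and>
      (\<forall>\<phi> P. skew_relation A G \<iota> c n \<phi> P \<longrightarrow>
          skew_morphism A \<phi> \<and> ext_power_function A \<phi> n P)"
    using p1 p2 by (rule conjI)
  qed
next
  show "\<forall>\<phi> P n. skew_morphism A \<phi> \<and> ext_power_function A \<phi> n P \<longrightarrow>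
      (\<exists>(G :: ('a \<times> nat) monoid) \<iota> c.
          skew_product A G \<iota> c n \<and> skew_relation A G \<iota> c n \<phi> P)"
  proof (intro allI impI)
  fix \<phi> P n
  assume h: "skew_morphism A \<phi> \<and> ext_power_function A \<phi> n P"
  have bij: "bij_betw \<phi> (carrier A) (carrier A)" and one: "\<phi> \<one>\<^bsub>A\<^esub> = \<one>\<^bsub>A\<^esub>"
    using h unfolding skew_morphism_def by auto
  obtain \<pi> where pf: "power_function A \<phi> \<pi>" and Pm: "\<forall>x\<in>carrier A. P x mod perm_order A \<phi> = \<pi> x"
    using h unfolding ext_power_function_def by blast
  interpret E: extA A \<phi> \<pi> n P
  proof -
    have "permA A \<phi>" by (simp add: permA_def assms bij)
    moreover have "skewA_axioms A \<phi> \<pi>" by (simp add: skewA_axioms_def one pf)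
    moreover have "extA_axioms A \<phi> \<pi> n P"
      using h Pm unfolding extA_axioms_def ext_power_function_def sig_def by blast
    ultimately show "extA A \<phi> \<pi> n P"
      by (simp add: extA_def skewA_def assms)
  qed
  show "\<exists>(G :: ('a \<times> nat) monoid) \<iota> c. skew_product A G \<iota> c n \<and> skew_relation A G \<iota> c n \<phi> P"
    using E.SG_skew_product E.SG_skew_relation by blast
  qed
next
  show "\<forall>\<phi>1 P1 \<phi>2 P2 n (G1 :: ('c, 'd) monoid_scheme) \<iota>1 c1 (G2 :: ('e, 'f) monoid_scheme) \<iota>2 c2.
      skew_morphism A \<phi>1 \<and> ext_power_function A \<phi>1 n P1 \<and>
      skew_morphism A \<phi>2 \<and> ext_power_function A \<phi>2 n P2 \<and>
      skew_product A G1 \<iota>1 c1 n \<and> skew_relation A G1 \<iota>1 c1 n \<phi>1 P1 \<and>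
      skew_product A G2 \<iota>2 c2 n \<and> skew_relation A G2 \<iota>2 c2 n \<phi>2 P2 \<longrightarrow>
      ((\<exists>\<Psi>. \<Psi> \<in> iso G1 G2 \<and> \<Psi> ` (\<iota>1 ` carrier A) = \<iota>2 ` carrier A \<and> \<Psi> c1 = c2)
       \<longleftrightarrow>
       (\<exists>\<theta>. \<theta> \<in> iso A A \<and>
          (\<forall>x\<in>carrier A. \<phi>2 x = \<theta> (\<phi>1 (inv_into (carrier A) \<theta> x)) \<and>
                          P2 x = P1 (inv_into (carrier A) \<theta> x))))"
  proof (intro allI impI)
  fix \<phi>1 P1 \<phi>2 P2 n and G1 :: "('c, 'd) monoid_scheme" and \<iota>1 c1 and G2 :: "('e, 'f) monoid_scheme" and \<iota>2 c2
  assume h: "skew_morphism A \<phi>1 \<and> ext_power_function A \<phi>1 n P1 \<and>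
      skew_morphism A \<phi>2 \<and> ext_power_function A \<phi>2 n P2 \<and>
      skew_product A G1 \<iota>1 c1 n \<and> skew_relation A G1 \<iota>1 c1 n \<phi>1 P1 \<and>
      skew_product A G2 \<iota>2 c2 n \<and> skew_relation A G2 \<iota>2 c2 n \<phi>2 P2"
  have g1: "group G1" and g2: "group G2" using h unfolding skew_product_def by blast+
  interpret T: two A G1 \<iota>1 c1 n \<phi>1 P1 G2 \<iota>2 c2 \<phi>2 P2
    using h by (simp add: two_def spR_def spR_axioms_def spG_def spG_axioms_def assms g1 g2)
  show "(\<exists>\<Psi>. \<Psi> \<in> iso G1 G2 \<and> \<Psi> ` (\<iota>1 ` carrier A) = \<iota>2 ` carrier A \<and> \<Psi> c1 = c2)
       \<longleftrightarrow>
       (\<exists>\<theta>. \<theta> \<in> iso A A \<and>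
          (\<forall>x\<in>carrier A. \<phi>2 x = \<theta> (\<phi>1 (inv_into (carrier A) \<theta> x)) \<and>
                          P2 x = P1 (inv_into (carrier A) \<theta> x)))"
    using T.fwd T.bwd by blast
  qed
qed

end
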